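(* Let $\beta\in C^0[0,1]$ with $\bar\beta=\|\beta\|_\infty$, let $k=\mathcal{K}(\beta)$ be the exact backstepping kernel, and let $\hat k\in C^0[0,1]$ satisfy $|k(x)-\hat k(x)|<\epsilon$ for all $x\in[0,1]$. Then the kernel $\hat l$ of the inverse of the transformation $\hat w(x)=u(x)-\int_0^x\hat k(x-y)u(y)\,dy$, namely the function with $u(x)=\hat w(x)+\int_0^x\hat l(x-y)\hat w(y)\,dy$, satisfies for all $x\in[0,1]$ $$|\hat l(x)|\le\big(\bar\beta+(1+\bar\beta)\epsilon\big)e^{(1+\bar\beta)\epsilon x}.$$
   Context: The backstepping kernel operator $\mathcal{K}$ maps $\beta\in C^0[0,1]$ to the solution $k$ of $k(x)=-\beta(x)+\int_0^x\beta(x-y)k(y)\,dy$, $x\in[0,1]$. $\|\cdot\|_\infty$ is the supremum norm on $[0,1]$. *)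

theory Defs
  imports "HOL-Analysis.Analysis"
begin

definition is_backstepping_kernel :: "(real \<Rightarrow> real) \<Rightarrow> (real \<Rightarrow> real) \<Rightarrow> bool" where
  "is_backstepping_kernel \<beta> k \<longleftrightarrow> continuous_on {0..1} k \<and>
     (\<forall>x\<in>{0..1}. k x = - \<beta> x + integral {0..x} (\<lambda>y. \<beta> (x - y) * k y))"

definition volterra_transform :: "(real \<Rightarrow> real) \<Rightarrow> (real \<Rightarrow> real) \<Rightarrow> real \<Rightarrow> real" where
  "volterra_transform kh u x = u x - integral {0..x} (\<lambda>y. kh (x - y) * u y)"

definition is_inverse_kernel :: "(real \<Rightarrow> real) \<Rightarrow> (real \<Rightarrow> real) \<Rightarrow> bool" where
  "is_inverse_kernel kh l \<longleftrightarrow> continuous_on {0..1} l \<and>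
     (\<forall>u. continuous_on {0..1} u \<longrightarrow>
        (\<forall>x\<in>{0..1}. u x = volterra_transform kh u x
            + integral {0..x} (\<lambda>y. l (x - y) * volterra_transform kh u y)))"

definition sup_norm01 :: "(real \<Rightarrow> real) \<Rightarrow> real" where
  "sup_norm01 f = (SUP x\<in>{0..1}. \<bar>f x\<bar>)"

end

theory Submission
  imports Defs
begin


lemma tri_fubini:
  fixes F :: "real \<Rightarrow> real \<Rightarrow> real" and x :: real
  assumes cont: "continuous_on {p. 0 \<le> snd p \<and> snd p \<le> fst p \<and> fst p \<le> x} (\<lambda>p. F (fst p) (snd p))"
  shows "integral {0..x} (\<lambda>y. integral {0..y} (\<lambda>s. F y s))
       = integral {0..x} (\<lambda>s. integral {s..x} (\<lambda>y. F y s))"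
proof -
  define T where "T = {p::real\<times>real. 0 \<le> snd p \<and> snd p \<le> fst p \<and> fst p \<le> x}"
  define G where "G = (\<lambda>p. indicator T p *\<^sub>R F (fst p) (snd p))"
  have closedT: "closed T" unfolding T_def
    by (intro closed_Collect_conj closed_Collect_le continuous_intros)
  have boundedT: "bounded T"
  proof -
    have "T \<subseteq> cbox (0,0) (x,x)" unfolding T_def by (auto simp: cbox_Pair_eq)
    then show ?thesis using bounded_cbox bounded_subset by blast
  qed
  have compT: "compact T" using closedT boundedT by (simp add: compact_eq_bounded_closed)
  have contT: "continuous_on T (\<lambda>p. F (fst p) (snd p))" using cont unfolding T_def .
  obtain B where B: "\<And>p. p \<in> T \<Longrightarrow> norm (F (fst p) (snd p)) \<le> B"
    using compact_imp_bounded[OF compact_continuous_image[OF contT compT]]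
    unfolding bounded_iff by auto
  have Tsets: "T \<in> sets borel" using closedT by (simp add: borel_closed)
  have meas: "G \<in> borel_measurable borel" unfolding G_def
    by (rule borel_measurable_continuous_on_indicator[OF Tsets contT])
  have intG: "integrable (lborel \<Otimes>\<^sub>M lborel) (\<lambda>(y,s). G (y,s))"
  proof -
    have "integrable lborel (\<lambda>p::real\<times>real. indicator T p *\<^sub>R F (fst p) (snd p))"
      apply (rule integrableI_bounded_set[where B=B and A=T])
      using Tsets meas emeasure_bounded_finite[OF boundedT] B
      by (auto simp: G_def indicator_def)
    moreover have "(\<lambda>(y,s). G (y,s)) = G" by auto
    ultimately show ?thesis unfolding lborel_prod G_def by simp
  qed
  have F1: "(\<integral>s. (\<integral>y. G (y,s) \<partial>lborel) \<partial>lborel) = (\<integral>y. (\<integral>s. G (y,s) \<partial>lborel) \<partial>lborel)"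
    using lborel_pair.Fubini_integral[of "\<lambda>y s. G (y,s)"] intG by simp
  have i1: "integrable lborel (\<lambda>y. \<integral>s. G (y,s) \<partial>lborel)"
    using lborel_pair.integrable_fst[of "\<lambda>y s. G (y,s)"] intG by simp
  have i2: "integrable lborel (\<lambda>s. \<integral>y. G (y,s) \<partial>lborel)"
    using lborel_pair.integrable_snd[of "\<lambda>y s. G (y,s)"] intG by simp
  have inner1: "(\<integral>s. G (y,s) \<partial>lborel) = indicator {0..x} y * integral {0..y} (\<lambda>s. F y s)" for y
  proof (cases "y \<in> {0..x}")
    case True
    have c: "continuous_on {0..y} (\<lambda>s. F y s)"
      apply (rule continuous_on_compose2[OF contT, of _ "\<lambda>s. (y,s)", simplified])
      using True by (auto simp: T_def intro!: continuous_intros)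
    have "(\<integral>s. G (y,s) \<partial>lborel) = (LINT s:{0..y}|lborel. F y s)"
      unfolding set_lebesgue_integral_def G_def
      using True by (intro Bochner_Integration.integral_cong) (auto simp: T_def indicator_def)
    also have "\<dots> = integral {0..y} (\<lambda>s. F y s)"
      using set_borel_integral_eq_integral(2)[OF borel_integrable_atLeastAtMost'[OF c]] .
    finally show ?thesis using True by simp
  next
    case False
    then have "G (y,s) = 0" for s by (auto simp: G_def T_def)
    then show ?thesis using False by simp
  qed
  have inner2: "(\<integral>y. G (y,s) \<partial>lborel) = indicator {0..x} s * integral {s..x} (\<lambda>y. F y s)" for s
  proof (cases "s \<in> {0..x}")
    case True
    have c: "continuous_on {s..x} (\<lambda>y. F y s)"
      apply (rule continuous_on_compose2[OF contT, of _ "\<lambda>y. (y,s)", simplified])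
      using True by (auto simp: T_def intro!: continuous_intros)
    have "(\<integral>y. G (y,s) \<partial>lborel) = (LINT y:{s..x}|lborel. F y s)"
      unfolding set_lebesgue_integral_def G_def
      using True by (intro Bochner_Integration.integral_cong) (auto simp: T_def indicator_def)
    also have "\<dots> = integral {s..x} (\<lambda>y. F y s)"
      using set_borel_integral_eq_integral(2)[OF borel_integrable_atLeastAtMost'[OF c]] .
    finally show ?thesis using True by simp
  next
    case False
    then have "G (y,s) = 0" for y by (auto simp: G_def T_def)
    then show ?thesis using False by simp
  qed
  have si1: "set_integrable lborel {0..x} (\<lambda>y. integral {0..y} (\<lambda>s. F y s))"
    unfolding set_integrable_def using i1 unfolding inner1 by (simp add: mult.commute)
  have si2: "set_integrable lborel {0..x} (\<lambda>s. integral {s..x} (\<lambda>y. F y s))"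
    unfolding set_integrable_def using i2 unfolding inner2 by (simp add: mult.commute)
  have "integral {0..x} (\<lambda>y. integral {0..y} (\<lambda>s. F y s)) = (\<integral>y. (\<integral>s. G (y,s) \<partial>lborel) \<partial>lborel)"
    unfolding inner1 set_borel_integral_eq_integral(2)[OF si1, symmetric] set_lebesgue_integral_def
    by (simp add: mult.commute)
  also have "\<dots> = (\<integral>s. (\<integral>y. G (y,s) \<partial>lborel) \<partial>lborel)" using F1 by simp
  also have "\<dots> = integral {0..x} (\<lambda>s. integral {s..x} (\<lambda>y. F y s))"
    unfolding inner2 set_borel_integral_eq_integral(2)[OF si2, symmetric] set_lebesgue_integral_def
    by (simp add: mult.commute)
  finally show ?thesis .
qed


definition conv :: "(real \<Rightarrow> real) \<Rightarrow> (real \<Rightarrow> real) \<Rightarrow> real \<Rightarrow> real" where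
  "conv f g x = integral {0..x} (\<lambda>y. f (x - y) * g y)"

lemma cont_sub:
  fixes f :: "real \<Rightarrow> real"
  assumes "continuous_on {0..1} f" "x \<in> {0..1::real}"
  shows "continuous_on {0..x} (\<lambda>y. f (x - y))"
  by (rule continuous_on_compose2[OF assms(1)]) (use assms(2) in \<open>auto intro!: continuous_intros\<close>)

lemma conv_integrable:
  fixes f g :: "real \<Rightarrow> real"
  assumes "continuous_on {0..1} f" "continuous_on {0..1} g" "x \<in> {0..1::real}"
  shows "(\<lambda>y. f (x - y) * g y) integrable_on {0..x}"
proof -
  have cg: "continuous_on {0..x} g" using assms by (auto intro: continuous_on_subset)
  show ?thesis
    using integrable_continuous_interval[OF continuous_on_mult'[OF cont_sub[OF assms(1,3)] cg]] .
qed

lemma integral_scale01: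
  fixes h :: "real \<Rightarrow> real"
  assumes "x \<ge> 0"
  shows "integral {0..x} h = x * integral {0..1} (\<lambda>t. h (x * t))"
proof (cases "x = 0")
  case True then show ?thesis by simp
next
  case False
  then have xp: "x > 0" using assms by simp
  have im: "(\<lambda>t. t / x) ` {0..x} = {0..1}"
  proof
    show "(\<lambda>t. t / x) ` {0..x} \<subseteq> {0..1}" using xp by auto
    show "{0..1} \<subseteq> (\<lambda>t. t / x) ` {0..x}"
    proof
      fix t :: real assume "t \<in> {0..1}"
      then have "x * t \<in> {0..x}" "t = (x*t)/x" using xp by (auto simp: mult_le_cancel_left1)
      then show "t \<in> (\<lambda>t. t / x) ` {0..x}" by blast
    qed
  qed
  have "integral {0..1} (\<lambda>t. h (x * t)) = (1 / \<bar>x\<bar>) *\<^sub>R integral {0..x} h"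
    using integral_stretch_real[of x 0 x h] False unfolding im by simp
  then show ?thesis using xp by simp
qed

lemma conv_continuous:
  assumes f: "continuous_on {0..1} f" and g: "continuous_on {0..1} g"
  shows "continuous_on {0..1} (conv f g)"
proof -
  have eq: "conv f g x = x * integral (cbox 0 1) (\<lambda>t. f (x - x * t) * g (x * t))" if "x \<in> {0..1}" for x
    unfolding conv_def using that by (subst integral_scale01) auto
  have c2: "continuous_on ({0..1} \<times> cbox 0 1) (\<lambda>(x, t). f (x - x * t) * g (x * t))"
  proof -
    have a: "continuous_on ({0..1} \<times> cbox 0 1) (\<lambda>p::real\<times>real. f (fst p - fst p * snd p))"
      apply (rule continuous_on_compose2[OF f])
       apply (auto intro!: continuous_intros)
      apply (metis mult_left_le)
      by (smt (verit) mult_nonneg_nonneg)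
    have b: "continuous_on ({0..1} \<times> cbox 0 1) (\<lambda>p::real\<times>real. g (fst p * snd p))"
      apply (rule continuous_on_compose2[OF g])
       apply (auto intro!: continuous_intros)
      by (simp add: mult_le_one)
    show ?thesis using continuous_on_mult[OF a b] by (simp add: case_prod_beta)
  qed
  have "continuous_on {0..1} (\<lambda>x. x * integral (cbox 0 1) (\<lambda>t. f (x - x * t) * g (x * t)))"
    using integral_continuous_on_param[where f="\<lambda>x t. f (x - x*t) * g (x*t)", OF c2]
    by (intro continuous_intros) auto
  then show ?thesis
    by (rule continuous_on_eq) (use eq in auto)
qed

lemma integral_reflect_ivl:
  fixes h :: "real \<Rightarrow> real"
  shows "integral {0..x} (\<lambda>y. h (x - y)) = integral {0..x} h"
proof -
  have r: "integral {-0..-(-x)} (\<lambda>y. h (x + -y)) = integral {-x..0} (\<lambda>y. h (x+y))"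
    by (rule Henstock_Kurzweil_Integration.integral_reflect_real)
  have e: "(\<lambda>y. h (x + -y)) = (\<lambda>y. h (x - y))" by simp
  have "integral {0..x} (\<lambda>y. h (x - y)) = integral {-x..-0} (\<lambda>y. h (x + y))"
    using r unfolding e by simp
  also have "\<dots> = integral {0 - x..x - x} (\<lambda>y. h (y + x))" by (simp add: add.commute)
  also have "\<dots> = integral {0..x} h" by (rule integral_shift_real_ivl)
  finally show ?thesis .
qed

lemma conv_comm: "conv f g x = conv g f x"
  unfolding conv_def
  using integral_reflect_ivl[of x "\<lambda>y. f y * g (x - y)"] by (simp add: mult.commute)

lemma conv_cong1:
  assumes "\<And>t. t \<in> {0..1} \<Longrightarrow> f t = f' t" "x \<in> {0..1::real}"
  shows "conv f g x = conv f' g x"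
  unfolding conv_def using assms by (intro integral_cong) auto

lemma conv_cong2:
  assumes "\<And>t. t \<in> {0..1} \<Longrightarrow> g t = g' t" "x \<in> {0..1::real}"
  shows "conv f g x = conv f g' x"
  unfolding conv_def using assms by (intro integral_cong) auto

lemma conv_add1:
  assumes "continuous_on {0..1} f" "continuous_on {0..1} f'" "continuous_on {0..1} g" "x \<in> {0..1::real}"
  shows "conv (\<lambda>t. f t + f' t) g x = conv f g x + conv f' g x"
  unfolding conv_def using conv_integrable[OF assms(1,3,4)] conv_integrable[OF assms(2,3,4)]
  by (simp add: distrib_right integral_add)

lemma conv_diff1:
  assumes "continuous_on {0..1} f" "continuous_on {0..1} f'" "continuous_on {0..1} g" "x \<in> {0..1::real}"
  shows "conv (\<lambda>t. f t - f' t) g x = conv f g x - conv f' g x"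
  unfolding conv_def using conv_integrable[OF assms(1,3,4)] conv_integrable[OF assms(2,3,4)]
  by (simp add: left_diff_distrib integral_diff)

lemma conv_diff2:
  assumes "continuous_on {0..1} f" "continuous_on {0..1} g" "continuous_on {0..1} g'" "x \<in> {0..1::real}"
  shows "conv f (\<lambda>t. g t - g' t) x = conv f g x - conv f g' x"
  unfolding conv_def using conv_integrable[OF assms(1,2,4)] conv_integrable[OF assms(1,3,4)]
  by (simp add: right_diff_distrib integral_diff)

lemma conv_neg1: "conv (\<lambda>t. - f t) g x = - conv f g x"
  unfolding conv_def by simp

lemma conv_assoc:
  assumes f: "continuous_on {0..1} f" and g: "continuous_on {0..1} g" and h: "continuous_on {0..1} h"
    and x: "x \<in> {0..1::real}"
  shows "conv (conv f g) h x = conv f (conv g h) x"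
proof -
  define F where "F = (\<lambda>y s. f (x - y) * g (y - s) * h s)"
  have cF: "continuous_on {p. 0 \<le> snd p \<and> snd p \<le> fst p \<and> fst p \<le> x} (\<lambda>p. F (fst p) (snd p))"
  proof -
    let ?T = "{p::real\<times>real. 0 \<le> snd p \<and> snd p \<le> fst p \<and> fst p \<le> x}"
    have a: "continuous_on ?T (\<lambda>p. f (x - fst p))"
      by (rule continuous_on_compose2[OF f]) (use x in \<open>auto intro!: continuous_intros\<close>)
    have b: "continuous_on ?T (\<lambda>p. g (fst p - snd p))"
      by (rule continuous_on_compose2[OF g]) (use x in \<open>auto intro!: continuous_intros\<close>)
    have c: "continuous_on ?T (\<lambda>p. h (snd p))"
      by (rule continuous_on_compose2[OF h]) (use x in \<open>auto intro!: continuous_intros\<close>)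
    show ?thesis unfolding F_def using continuous_on_mult[OF continuous_on_mult[OF a b] c] .
  qed
  have "conv f (conv g h) x = integral {0..x} (\<lambda>y. integral {0..y} (\<lambda>s. F y s))"
    unfolding conv_def F_def by (simp add: mult.assoc)
  also have "\<dots> = integral {0..x} (\<lambda>s. integral {s..x} (\<lambda>y. F y s))"
    by (rule tri_fubini[OF cF])
  also have "\<dots> = conv (conv f g) h x"
    unfolding conv_def
  proof (rule integral_cong)
    fix s assume s: "s \<in> {0..x}"
    have "integral {s..x} (\<lambda>y. F y s) = integral {s - s..x - s} (\<lambda>z. F (z + s) s)"
      by (rule integral_shift_real_ivl[symmetric])
    also have "\<dots> = integral {0..x - s} (\<lambda>z. F (z + s) s)" by simp
    also have "\<dots> = integral {0..x - s} (\<lambda>z. f (x - s - z) * g z * h s)"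
      by (rule integral_cong) (simp add: F_def algebra_simps)
    also have "\<dots> = integral {0..x - s} (\<lambda>z. f (x - s - z) * g z) * h s"
      by (rule integral_mult_left)
    finally show "integral {s..x} (\<lambda>y. F y s) = integral {0..x - s} (\<lambda>y. f (x - s - y) * g y) * h s" .
  qed
  finally show ?thesis ..
qed


lemma conv_add2:
  assumes "continuous_on {0..1} f" "continuous_on {0..1} g" "continuous_on {0..1} g'" "x \<in> {0..1::real}"
  shows "conv f (\<lambda>t. g t + g' t) x = conv f g x + conv f g' x"
  unfolding conv_def using conv_integrable[OF assms(1,2,4)] conv_integrable[OF assms(1,3,4)]
  by (simp add: distrib_left integral_add)

lemma conv_bound:
  fixes f g :: "real \<Rightarrow> real"
  assumes f: "continuous_on {0..1} f" and g: "continuous_on {0..1} g" and x: "x \<in> {0..1}"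
    and fb: "\<And>t. t \<in> {0..1} \<Longrightarrow> \<bar>f t\<bar> \<le> a"
  shows "\<bar>conv f g x\<bar> \<le> a * integral {0..x} (\<lambda>y. \<bar>g y\<bar>)"
proof -
  have cg: "continuous_on {0..x} g" using g x by (auto intro: continuous_on_subset)
  have i2: "(\<lambda>y. a * \<bar>g y\<bar>) integrable_on {0..x}"
    by (intro integrable_continuous_interval continuous_intros cg)
  have "norm (conv f g x) \<le> integral {0..x} (\<lambda>y. a * \<bar>g y\<bar>)"
    unfolding conv_def
  proof (rule integral_norm_bound_integral[OF conv_integrable[OF f g x] i2])
    fix y assume y: "y \<in> {0..x}"
    have "\<bar>f (x - y)\<bar> \<le> a" using y x by (intro fb) auto
    then show "norm (f (x - y) * g y) \<le> a * \<bar>g y\<bar>"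
      by (simp add: abs_mult mult_right_mono)
  qed
  then show ?thesis by simp
qed

lemma gronwall:
  fixes v :: "real \<Rightarrow> real"
  assumes v: "continuous_on {0..1} v" and B: "B > 0"
    and ineq: "\<And>x. x \<in> {0..1} \<Longrightarrow> v x \<le> A + B * integral {0..x} v"
    and x: "x \<in> {0..1}"
  shows "v x \<le> A * exp (B * x)"
proof -
  define \<phi> where "\<phi> = (\<lambda>x. integral {0..x} v)"
  define \<psi> where "\<psi> = (\<lambda>x. exp (- B * x) * (\<phi> x + A / B))"
  define \<psi>' where "\<psi>' = (\<lambda>x. exp (- B * x) * v x + (- B) * exp (- B * x) * (\<phi> x + A / B))"
  have dphi: "(\<phi> has_real_derivative v t) (at t within {0..x})" if "t \<in> {0..x}" for t
  proof -
    have "(\<phi> has_real_derivative v t) (at t within {0..1})"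
      unfolding \<phi>_def using that x by (intro integral_has_real_derivative v) auto
    then show ?thesis by (rule DERIV_subset) (use x in auto)
  qed
  have dpsi: "(\<psi> has_vector_derivative \<psi>' t) (at t within {0..x})" if "t \<in> {0..x}" for t
  proof -
    have "(\<psi> has_real_derivative \<psi>' t) (at t within {0..x})"
      unfolding \<psi>_def \<psi>'_def
      by (rule derivative_eq_intros refl dphi[OF that] | simp add: algebra_simps)+
    then show ?thesis by (simp add: has_real_derivative_iff_has_vector_derivative)
  qed
  have "(\<psi>' has_integral \<psi> x - \<psi> 0) {0..x}"
    by (rule fundamental_theorem_of_calculus) (use x dpsi in auto)
  moreover have "\<psi>' t \<le> 0" if "t \<in> {0..x}" for t
  proof -
    have "v t \<le> A + B * \<phi> t" unfolding \<phi>_def using that x by (intro ineq) auto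
    then have "v t - B * (\<phi> t + A / B) \<le> 0" using B by (simp add: algebra_simps)
    then have "exp (- B * t) * (v t - B * (\<phi> t + A / B)) \<le> 0"
      by (simp add: mult_nonneg_nonpos)
    moreover have "\<psi>' t = exp (- B * t) * (v t - B * (\<phi> t + A / B))"
      unfolding \<psi>'_def by (simp add: algebra_simps)
    ultimately show ?thesis by simp
  qed
  ultimately have "\<psi> x - \<psi> 0 \<le> 0"
    using has_integral_le[of \<psi>' "\<psi> x - \<psi> 0" "{0..x}" "\<lambda>_. 0" 0] by auto
  then have "exp (- B * x) * (\<phi> x + A / B) \<le> A / B" unfolding \<psi>_def \<phi>_def by simp
  then have "\<phi> x + A / B \<le> A / B * exp (B * x)"
    by (simp add: exp_minus field_simps)
  then have "B * (\<phi> x + A / B) \<le> B * (A / B * exp (B * x))"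
    using B by (intro mult_left_mono) auto
  then have "B * \<phi> x + A \<le> A * exp (B * x)" using B by (simp add: distrib_left)
  then show ?thesis using ineq[OF x] unfolding \<phi>_def by simp
qed


theorem lemma3:
  fixes \<beta> k kh l :: "real \<Rightarrow> real" and \<epsilon> :: real
  assumes "continuous_on {0..1} \<beta>"
    and "is_backstepping_kernel \<beta> k"
    and "continuous_on {0..1} kh"
    and "\<forall>x\<in>{0..1}. \<bar>k x - kh x\<bar> < \<epsilon>"
    and "is_inverse_kernel kh l"
  shows "\<forall>x\<in>{0..1}. \<bar>l x\<bar> \<le> (sup_norm01 \<beta> + (1 + sup_norm01 \<beta>) * \<epsilon>)
            * exp ((1 + sup_norm01 \<beta>) * \<epsilon> * x)"
proof -
  note cb = assms(1)
  have ck: "continuous_on {0..1} k" and keq: "\<And>x. x \<in> {0..1} \<Longrightarrow> k x = - \<beta> x + conv \<beta> k x"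
    using assms(2) unfolding is_backstepping_kernel_def conv_def by auto
  note ckh = assms(3)
  have cl: "continuous_on {0..1} l"
    and hyp: "\<And>u x. continuous_on {0..1} u \<Longrightarrow> x \<in> {0..1} \<Longrightarrow>
         u x = (u x - conv kh u x) + conv l (\<lambda>y. u y - conv kh u y) x"
    using assms(5) unfolding is_inverse_kernel_def volterra_transform_def conv_def by auto
  define h where "h = (\<lambda>t. l t - kh t - conv l kh t)"
  have clkh: "continuous_on {0..1} (conv l kh)" by (rule conv_continuous[OF cl ckh])
  have ch: "continuous_on {0..1} h" unfolding h_def
    by (intro continuous_intros cl ckh clkh)
  have H: "conv h u x = 0" if cu: "continuous_on {0..1} u" and x: "x \<in> {0..1}" for u x
  proof -
    have ckhu: "continuous_on {0..1} (conv kh u)" by (rule conv_continuous[OF ckh cu])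
    have "conv l (\<lambda>y. u y - conv kh u y) x = conv l u x - conv l (conv kh u) x"
      by (rule conv_diff2[OF cl cu ckhu x])
    also have "conv l (conv kh u) x = conv (conv l kh) u x"
      by (rule conv_assoc[OF cl ckh cu x, symmetric])
    finally have e1: "conv kh u x = conv l u x - conv (conv l kh) u x"
      using hyp[OF cu x] by simp
    have "conv h u x = conv (\<lambda>t. l t - kh t) u x - conv (conv l kh) u x"
      unfolding h_def by (rule conv_diff1) (intro continuous_intros cl ckh clkh cu x)+
    also have "conv (\<lambda>t. l t - kh t) u x = conv l u x - conv kh u x"
      by (rule conv_diff1[OF cl ckh cu x])
    finally show ?thesis using e1 by simp
  qed
  have Lk: "l t = kh t + conv l kh t" if t: "t \<in> {0..1}" for t
  proof -
    define u where "u = (\<lambda>y. h (1 - y))"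
    have cu: "continuous_on {0..1} u" unfolding u_def
      by (rule continuous_on_compose2[OF ch]) (auto intro!: continuous_intros)
    have cuu: "continuous_on (cbox 0 1) (\<lambda>y. u y * u y)"
      using cu by (auto intro!: continuous_intros)
    have "conv h u 1 = 0" using H[OF cu] by simp
    then have "integral {0..1} (\<lambda>y. u y * u y) = 0" unfolding conv_def u_def by simp
    then have hi: "((\<lambda>y. u y * u y) has_integral 0) (cbox 0 1)"
      using integrable_continuous[OF cuu] by (metis has_integral_integral interval_cbox)
    have "u (1 - t) * u (1 - t) = 0"
      by (rule has_integral_0_cbox_imp_0[OF cuu _ hi]) (use t in auto)
    then have "h t = 0" unfolding u_def by simp
    then show ?thesis unfolding h_def by simp
  qed
  define e where "e = (\<lambda>t. k t - kh t)"
  define g where "g = (\<lambda>t. e t - conv \<beta> e t)"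
  have ce: "continuous_on {0..1} e" unfolding e_def by (intro continuous_intros ck ckh)
  have cbe: "continuous_on {0..1} (conv \<beta> e)" by (rule conv_continuous[OF cb ce])
  have cg: "continuous_on {0..1} g" unfolding g_def by (intro continuous_intros ce cbe)
  have ckl: "continuous_on {0..1} (conv k l)" by (rule conv_continuous[OF ck cl])
  have E1: "conv e l t = conv k l t - l t + kh t" if t: "t \<in> {0..1}" for t
  proof -
    have "conv e l t = conv k l t - conv kh l t" unfolding e_def by (rule conv_diff1[OF ck ckh cl t])
    also have "conv kh l t = l t - kh t" using Lk[OF t] conv_comm[of kh l t] by simp
    finally show ?thesis by simp
  qed
  have main: "- \<beta> x - l x = g x + conv g l x" if x: "x \<in> {0..1}" for x
  proof -
    have a1: "conv g l x = conv e l x - conv (conv \<beta> e) l x"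
      unfolding g_def by (rule conv_diff1[OF ce cbe cl x])
    have a2: "conv (conv \<beta> e) l x = conv \<beta> (conv e l) x" by (rule conv_assoc[OF cb ce cl x])
    have a3: "conv \<beta> (conv e l) x = conv \<beta> (\<lambda>t. (conv k l t - l t) + kh t) x"
      by (rule conv_cong2) (use E1 x in auto)
    have a4: "conv \<beta> (\<lambda>t. (conv k l t - l t) + kh t) x
        = conv \<beta> (conv k l) x - conv \<beta> l x + conv \<beta> kh x"
      by (subst conv_add2) (intro continuous_intros ckl cl ckh cb x conv_diff2 | simp)+
    have a5: "conv \<beta> (conv k l) x = conv (conv \<beta> k) l x" by (rule conv_assoc[OF cb ck cl x, symmetric])
    have a6: "conv (conv \<beta> k) l x = conv (\<lambda>t. k t + \<beta> t) l x"
      by (rule conv_cong1) (use keq x in auto)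
    have a7: "conv (\<lambda>t. k t + \<beta> t) l x = conv k l x + conv \<beta> l x"
      by (rule conv_add1[OF ck cb cl x])
    have a8: "conv \<beta> e x = conv \<beta> k x - conv \<beta> kh x"
      unfolding e_def by (rule conv_diff2[OF cb ck ckh x])
    show ?thesis using a1 a2 a3 a4 a5 a6 a7 a8 keq[OF x] E1[OF x]
      unfolding g_def e_def by simp
  qed
  define bb where "bb = sup_norm01 \<beta>"
  have cab: "continuous_on {0..1} (\<lambda>x. \<bar>\<beta> x\<bar>)" by (intro continuous_intros cb)
  have bddb: "bdd_above ((\<lambda>x. \<bar>\<beta> x\<bar>) ` {0..1})"
    using compact_imp_bounded[OF compact_continuous_image[OF cab compact_Icc]]
    by (auto intro: bounded_imp_bdd_above)
  have bb: "\<bar>\<beta> t\<bar> \<le> bb" if "t \<in> {0..1}" for t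
    unfolding bb_def sup_norm01_def using that bddb by (intro cSUP_upper) auto
  have bb0: "bb \<ge> 0" using bb[of 0] by simp
  have eb: "\<bar>e t\<bar> \<le> \<epsilon>" if "t \<in> {0..1}" for t using assms(4) that unfolding e_def by force
  have ep: "\<epsilon> > 0" using assms(4) by (metis abs_ge_zero atLeastAtMost_iff le_less_trans zero_le_one order_refl)
  define B where "B = (1 + bb) * \<epsilon>"
  have Bp: "B > 0" unfolding B_def using bb0 ep by simp
  have gb: "\<bar>g t\<bar> \<le> B" if t: "t \<in> {0..1}" for t
  proof -
    have "\<bar>conv \<beta> e t\<bar> \<le> bb * integral {0..t} (\<lambda>y. \<bar>e y\<bar>)" by (rule conv_bound[OF cb ce t bb])
    also have "integral {0..t} (\<lambda>y. \<bar>e y\<bar>) \<le> integral {0..t} (\<lambda>y. \<epsilon>)"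
    proof (rule integral_le)
      show "(\<lambda>y. \<bar>e y\<bar>) integrable_on {0..t}"
        using ce t by (intro integrable_continuous_interval continuous_intros) (auto intro: continuous_on_subset)
    qed (use eb t in auto)
    also have "integral {0..t} (\<lambda>y. \<epsilon>) \<le> \<epsilon>" using t ep by (simp add: mult_le_cancel_right1)
    finally have "\<bar>conv \<beta> e t\<bar> \<le> bb * \<epsilon>" using bb0 by (simp add: mult_left_mono)
    then show ?thesis unfolding g_def B_def using eb[OF t] by (simp add: algebra_simps)
  qed
  have lineq: "\<bar>l x\<bar> \<le> (bb + B) + B * integral {0..x} (\<lambda>y. \<bar>l y\<bar>)" if x: "x \<in> {0..1}" for x
  proof -
    have "l x = - \<beta> x - g x - conv g l x" using main[OF x] by simp
    then have "\<bar>l x\<bar> \<le> \<bar>\<beta> x\<bar> + \<bar>g x\<bar> + \<bar>conv g l x\<bar>" by simp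
    moreover have "\<bar>conv g l x\<bar> \<le> B * integral {0..x} (\<lambda>y. \<bar>l y\<bar>)" by (rule conv_bound[OF cg cl x gb])
    ultimately show ?thesis using bb[OF x] gb[OF x] by simp
  qed
  show ?thesis
  proof
    fix x :: real assume x: "x \<in> {0..1}"
    have "\<bar>l x\<bar> \<le> (bb + B) * exp (B * x)"
      by (rule gronwall[where v="\<lambda>y. \<bar>l y\<bar>", OF _ Bp lineq x]) (intro continuous_intros cl, simp)
    then show "\<bar>l x\<bar> \<le> (sup_norm01 \<beta> + (1 + sup_norm01 \<beta>) * \<epsilon>) * exp ((1 + sup_norm01 \<beta>) * \<epsilon> * x)"
      unfolding B_def bb_def .
  qed
qed

end
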